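(* Let $P$ be an optimal EBA decision protocol with respect to $\gamma_{\mathit{fip},n,t}$ and $\mathcal I=\mathcal I_{\gamma_{\mathit{fip},n,t},P}$. If for some agent $i$ and point $(r,m)$ we have $\mathcal I,(r,m)\models \mathit{decided}_i=\bot\wedge K_i\big(C_{\mathcal N}(\mathit{t\text{-}faulty}\wedge\mathit{no\text{-}decided}_{\mathcal N}(1)\wedge\exists 0)\big)$, then every agent $j\in\mathcal N(r)$ that has not decided by time $m$ decides in round $m+1$ of $r$. The same conclusion holds if instead $\mathcal I,(r,m)\models \mathit{decided}_i=\bot\wedge K_i\big(C_{\mathcal N}(\mathit{t\text{-}faulty}\wedge\mathit{no\text{-}decided}_{\mathcal N}(0)\wedge\exists 1)\big)$.
   Context: Agents and runs. There are $n$ agents $\mathit{Agt}=\{1,\ldots,n\}$; time is $m\in\mathbb N$, and round $m+1$ is the step from time $m$ to time $m+1$. A failure pattern is a pair $(\mathcal N,F)$ with $\mathcal N\subseteq\mathit{Agt}$ (the nonfaulty agents) and $F:\mathbb N\times\mathit{Agt}\times\mathit{Agt}\to\{0,1\}$, where $F(m,i,j)=0$ means the message from $i$ to $j$ in round $m+1$ is lost. The sending-omissions failure model $SO(t)$ ($t<n$) is the set of failure patterns with $|\mathit{Agt}\setminus\mathcal N|\le t$ such that $F(m,i,j)=0$ implies $i\notin\mathcal N$. An action protocol $P$ gives each agent $i$ a map $P_i$ from its local states to actions $\{\mathtt{decide}_i(0),\mathtt{decide}_i(1),\mathtt{noop}\}$; a run $r$ is determined by the initial states and failure pattern: at each time $k$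 each agent performs $P_i(r_i(k))$, sends its messages, lost messages are replaced by $\bot$, and local states are updated; $\mathcal N(r)$ is the nonfaulty set of $r$. Agent $i$ decides $v$ in round $k$ of $r$ if $P_i(r_i(k-1))=\mathtt{decide}_i(v)$. $\mathcal I,(r,m)\models K_i\varphi$ iff $\varphi$ holds at all points $(r',m')$ of $\mathcal I$ with $r'_i(m')=r_i(m)$; $\bigcirc\varphi$ holds at $(r,m)$ iff $\varphi$ holds at $(r,m+1)$; $\ominus\varphi$ holds at $(r,m)$ iff $m>0$ and $\varphi$ holds at $(r,m-1)$. Full-information context. $\gamma_{\mathit{fip},n,t}$ has $n$ agents and failure model $SO(t)$. Each agent's local state consists of its time $\mathit{time}_i$, its initial preference $\mathit{init}_i\in\{0,1\}$ (arbitrary), and the complete record of all messages it has received (with senders and rounds); it does not contain decision variables. In every round every agent sends its entire current local state to every agent, regardless of its action. Given an action protocol $P$, $\mathcal I_{\gamma_{\mathit{fip},n,t},P}$ is the interpreted system of all its runs, where $\mathit{decided}_i=v$ holds at $(r,m)$ iff $i$ decided $v$ in some round $\le m$ of $r$ ($\mathit{decided}_i=\bot$ if $i$ has not decided), $\mathit{init}_i=v$ is read from the local state, and $i\in\mathcal N$ holds iff $i\in\mathcal N(r)$. $\exists v$ abbreviates $\bigvee_j\mathit{init}_j=v$. $P$ is an EBA decision protocol for $\gamma_{\mathit{fip},n,t}$ if in every run: (Unique Decision) no agent decides $v$ and later $1-v$; (Agreement) no two nonfaulty agents decide different values; (Validity) if a nonfaulty agent decides $v$ then $\mathit{init}_j=v$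 for some $j$; (Termination) every nonfaulty agent eventually decides. Runs of $P$ and $P'$ correspond if they have the same initial global state. $P$ dominates $P'$ ($P'\le P$) if for all corresponding runs $r$ of $P$, $r'$ of $P'$, every $i\in\mathcal N(r)$ and time $m$: if $P_i(r_i(m))=\mathtt{decide}_i(v)$ then $P'_i(r'_i(m'))$ is not a decide action for any $m'<m$; $P$ strictly dominates $P'$ if $P'\le P$ and not $P\le P'$; an EBA decision protocol is optimal if no EBA decision protocol strictly dominates it. Common knowledge. $E_{\mathcal N}\varphi$ holds at $(r,m)$ iff $K_j\varphi$ holds at $(r,m)$ for every $j\in\mathcal N(r)$; $C_{\mathcal N}\varphi$ holds iff $E_{\mathcal N}^k\varphi$ holds for every $k\ge1$. $C_{\mathcal N}(\mathit{t\text{-}faulty}\wedge\varphi)$ abbreviates $\bigvee_{A\subseteq\mathit{Agt},\,|A|=t}C_{\mathcal N}\big(\bigwedge_{i\in A}\neg(i\in\mathcal N)\wedge\varphi\big)$, and $C_{\mathcal N}(\mathit{t\text{-}faulty})$ is the case $\varphi=\mathit{true}$. $\mathit{no\text{-}decided}_{\mathcal N}(x)$ abbreviates $\bigwedge_{j\in\mathcal N}\neg(\mathit{decided}_j=x)$. *)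

theory Defs
  imports Main
begin

(* Values 0/1 are represented by False/True. *)

(* Full-information local state: time, initial preference, and the record of
   messages received: entry k of the list is round k+1, mapping each sender j
   to Some (j's local state at time k) or None (message lost, i.e. \<bottom>). *)
datatype lstate = LS (ls_time: nat) (ls_init: bool) (ls_recv: "(nat \<Rightarrow> lstate option) list")

datatype action = Decide bool | Noop

(* A run is determined by initial values and a failure pattern (N, F);
   F m i j = False means the message from i to j in round m+1 is lost. *)
record run =
  rinit :: "nat \<Rightarrow> bool"
  rN :: "nat set"
  rF :: "nat \<Rightarrow> nat \<Rightarrow> nat \<Rightarrow> bool"

definition agts :: "nat \<Rightarrow> nat set" where
  "agts n = {1..n}"

definition SO :: "nat \<Rightarrow> nat \<Rightarrow> nat set \<Rightarrow> (nat \<Rightarrow> nat \<Rightarrow> nat \<Rightarrow> bool) \<Rightarrow> bool" where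
  "SO n t Nf F \<longleftrightarrow> Nf \<subseteq> agts n \<and> card (agts n - Nf) \<le> t \<and> (\<forall>m i j. \<not> F m i j \<longrightarrow> i \<notin> Nf)"

primrec gst :: "nat \<Rightarrow> (nat \<Rightarrow> bool) \<Rightarrow> (nat \<Rightarrow> nat \<Rightarrow> nat \<Rightarrow> bool) \<Rightarrow> nat \<Rightarrow> nat \<Rightarrow> lstate" where
  "gst n init F 0 = (\<lambda>i. LS 0 (init i) [])"
| "gst n init F (Suc m) = (\<lambda>i. LS (Suc m) (init i)
      (ls_recv (gst n init F m i) @
        [(\<lambda>j. if j \<in> agts n \<and> F m j i then Some (gst n init F m j) else None)]))"

definition lst :: "nat \<Rightarrow> run \<Rightarrow> nat \<Rightarrow> nat \<Rightarrow> lstate" where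
  "lst n r i m = gst n (rinit r) (rF r) m i"

(* all runs of gamma_fip,n,t (local states do not depend on the protocol) *)
definition runs :: "nat \<Rightarrow> nat \<Rightarrow> run set" where
  "runs n t = {r. SO n t (rN r) (rF r)}"

type_synonym protocol = "nat \<Rightarrow> lstate \<Rightarrow> action"
type_synonym point = "run \<times> nat"
type_synonym fml = "point \<Rightarrow> bool"

definition is_decide :: "action \<Rightarrow> bool" where
  "is_decide a \<longleftrightarrow> (\<exists>v. a = Decide v)"

definition decides_in_round :: "protocol \<Rightarrow> nat \<Rightarrow> run \<Rightarrow> nat \<Rightarrow> nat \<Rightarrow> bool \<Rightarrow> bool" where
  "decides_in_round P n r i k v \<longleftrightarrow> 1 \<le> k \<and> P i (lst n r i (k - 1)) = Decide v"

definition decided_val :: "protocol \<Rightarrow> nat \<Rightarrow> nat \<Rightarrow> bool \<Rightarrow> fml" where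
  "decided_val P n i v = (\<lambda>(r, m). \<exists>k. k \<le> m \<and> decides_in_round P n r i k v)"

definition undecided :: "protocol \<Rightarrow> nat \<Rightarrow> nat \<Rightarrow> fml" where
  "undecided P n i = (\<lambda>(r, m). \<forall>k v. k \<le> m \<longrightarrow> \<not> decides_in_round P n r i k v)"

definition K :: "run set \<Rightarrow> nat \<Rightarrow> nat \<Rightarrow> fml \<Rightarrow> fml" where
  "K R n i \<phi> = (\<lambda>(r, m). \<forall>r'\<in>R. \<forall>m'. lst n r' i m' = lst n r i m \<longrightarrow> \<phi> (r', m'))"

definition E_N :: "run set \<Rightarrow> nat \<Rightarrow> fml \<Rightarrow> fml" where
  "E_N R n \<phi> = (\<lambda>(r, m). \<forall>j\<in>rN r. K R n j \<phi> (r, m))"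

definition C_N :: "run set \<Rightarrow> nat \<Rightarrow> fml \<Rightarrow> fml" where
  "C_N R n \<phi> = (\<lambda>pt. \<forall>k\<ge>1. ((E_N R n) ^^ k) \<phi> pt)"

definition C_tfaulty :: "run set \<Rightarrow> nat \<Rightarrow> nat \<Rightarrow> fml \<Rightarrow> fml" where
  "C_tfaulty R n t \<phi> = (\<lambda>pt. \<exists>A. A \<subseteq> agts n \<and> card A = t \<and>
       C_N R n (\<lambda>(r, m). (\<forall>i\<in>A. i \<notin> rN r) \<and> \<phi> (r, m)) pt)"

definition no_decided :: "protocol \<Rightarrow> nat \<Rightarrow> bool \<Rightarrow> fml" where
  "no_decided P n x = (\<lambda>(r, m). \<forall>j\<in>rN r. \<not> decided_val P n j x (r, m))"

definition exists_init :: "nat \<Rightarrow> bool \<Rightarrow> fml" where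
  "exists_init n v = (\<lambda>(r, m). \<exists>j\<in>agts n. rinit r j = v)"

definition EBA :: "nat \<Rightarrow> nat \<Rightarrow> protocol \<Rightarrow> bool" where
  "EBA n t P \<longleftrightarrow> (\<forall>r\<in>runs n t.
     (\<forall>i\<in>agts n. \<forall>k k' v. k < k' \<and> decides_in_round P n r i k v \<longrightarrow> \<not> decides_in_round P n r i k' (\<not> v))
   \<and> (\<forall>i\<in>rN r. \<forall>j\<in>rN r. \<forall>k k' v w. decides_in_round P n r i k v \<and> decides_in_round P n r j k' w \<longrightarrow> v = w)
   \<and> (\<forall>i\<in>rN r. \<forall>k v. decides_in_round P n r i k v \<longrightarrow> (\<exists>j\<in>agts n. rinit r j = v))
   \<and> (\<forall>i\<in>rN r. \<exists>k v. decides_in_round P n r i k v))"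

(* P dominates P' (P' \<le> P); corresponding runs are the runs with the same
   initial values and failure pattern *)
definition dominates :: "nat \<Rightarrow> nat \<Rightarrow> protocol \<Rightarrow> protocol \<Rightarrow> bool" where
  "dominates n t P P' \<longleftrightarrow> (\<forall>r\<in>runs n t. \<forall>i\<in>rN r. \<forall>m v.
      P i (lst n r i m) = Decide v \<longrightarrow> (\<forall>m'<m. \<not> is_decide (P' i (lst n r i m'))))"

definition optimal :: "nat \<Rightarrow> nat \<Rightarrow> protocol \<Rightarrow> bool" where
  "optimal n t P \<longleftrightarrow> EBA n t P \<and>
     \<not> (\<exists>P'. EBA n t P' \<and> dominates n t P' P \<and> \<not> dominates n t P P')"

end

theory Submission imports Defs begin
lemma gst_time: "ls_time (gst n init F m i) = m" by (cases m) auto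
lemma gst_init: "ls_init (gst n init F m i) = init i" by (cases m) auto
lemma gst_len: "length (ls_recv (gst n init F m i)) = m" by (induct m) auto
lemma gst_take: "k \<le> m \<Longrightarrow> ls_recv (gst n init F k i) = take k (ls_recv (gst n init F m i))"
proof (induct m)
  case 0 then show ?case by simp
next
  case (Suc m)
  show ?case
  proof (cases "k = Suc m")
    case True then show ?thesis using gst_len[of n init F "Suc m" i] by simp
  next
    case False then have "k \<le> m" using Suc by simp
    then show ?thesis using Suc gst_len[of n init F m i] by simp
  qed
qed
lemma gst_repr: "k \<le> m \<Longrightarrow> gst n init F k i = LS k (init i) (take k (ls_recv (gst n init F m i)))"
proof -
  assume k: "k \<le> m"
  have "gst n init F k i = LS (ls_time (gst n init F k i)) (ls_init (gst n init F k i)) (ls_recv (gst n init F k i))"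
    by (rule lstate.collapse[symmetric])
  then show ?thesis by (simp only: gst_time gst_init gst_take[OF k])
qed

lemma lst_prefix:
  assumes "lst n r1 j m = lst n r2 j m'"
  shows "m = m' \<and> (\<forall>k\<le>m. lst n r1 j k = lst n r2 j k)"
proof -
  have "ls_time (lst n r1 j m) = ls_time (lst n r2 j m')" using assms by simp
  then have mm: "m = m'" by (simp only: lst_def gst_time)
  have e: "gst n (rinit r1) (rF r1) m j = gst n (rinit r2) (rF r2) m j"
      using assms by (simp only: lst_def mm)
  have i: "rinit r1 j = rinit r2 j" using arg_cong[OF e, of ls_init] by (simp only: gst_init)
  have rc: "ls_recv (gst n (rinit r1) (rF r1) m j) = ls_recv (gst n (rinit r2) (rF r2) m j)"
      using e by (rule arg_cong)
  have "\<forall>k\<le>m. lst n r1 j k = lst n r2 j k"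
  proof (intro allI impI)
    fix k assume k: "k \<le> m"
    show "lst n r1 j k = lst n r2 j k" unfolding lst_def
unfolding lst_def by (simp only: gst_repr[OF k, of n "rinit r1" "rF r1" j] gst_repr[OF k, of n "rinit r2" "rF r2" j] i rc)
  qed
  with mm show ?thesis by simp
qed

lemma least_ex: assumes "Q (x::nat)" shows "\<exists>y\<le>x. Q y \<and> (\<forall>z<y. \<not> Q z)"
proof -
  let ?y = "LEAST y. Q y"
  have "Q ?y" using assms by (rule LeastI)
  moreover have "?y \<le> x" using assms by (rule Least_le)
  moreover have "\<forall>z<?y. \<not> Q z" using not_less_Least by blast
  ultimately show ?thesis by blast
qed

lemma runs_N: assumes "r \<in> runs n t" "t < n" shows "rN r \<subseteq> agts n" "rN r \<noteq> {}"
proof -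
  have so: "SO n t (rN r) (rF r)" using assms(1) unfolding runs_def by simp
  then show "rN r \<subseteq> agts n" unfolding SO_def by simp
  show "rN r \<noteq> {}"
  proof
    assume "rN r = {}"
    then have "card (agts n) \<le> t" using so unfolding SO_def by simp
    then show False using assms(2) unfolding agts_def by simp
  qed
qed

definition Qp :: "nat \<Rightarrow> nat \<Rightarrow> protocol \<Rightarrow> protocol" where
  "Qp n t P j s = (if \<exists>r\<in>runs n t. \<exists>m. lst n r j m = s \<and> (\<exists>k<m. is_decide (P j (lst n r j k))) then Noop else P j s)"

lemma Qp_eq: assumes r: "r \<in> runs n t"
  shows "Qp n t P j (lst n r j m) = (if \<exists>k<m. is_decide (P j (lst n r j k)) then Noop else P j (lst n r j m))"
proof -
  have c: "(\<exists>r'\<in>runs n t. \<exists>m'. lst n r' j m' = lst n r j m \<and> (\<exists>k<m'. is_decide (P j (lst n r' j k))))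
     \<longleftrightarrow> (\<exists>k<m. is_decide (P j (lst n r j k)))"
  proof
    assume "\<exists>r'\<in>runs n t. \<exists>m'. lst n r' j m' = lst n r j m \<and> (\<exists>k<m'. is_decide (P j (lst n r' j k)))"
    then obtain r' m' k where e: "lst n r' j m' = lst n r j m" and k: "k < m'" and d: "is_decide (P j (lst n r' j k))"
      by blast
    from lst_prefix[OF e] have mm: "m' = m" and "\<forall>k\<le>m'. lst n r' j k = lst n r j k" by auto
    then have "lst n r' j k = lst n r j k" using k by simp
    then show "\<exists>k<m. is_decide (P j (lst n r j k))" using d k mm by auto
  next
    assume "\<exists>k<m. is_decide (P j (lst n r j k))"
    then show "\<exists>r'\<in>runs n t. \<exists>m'. lst n r' j m' = lst n r j m \<and> (\<exists>k<m'. is_decide (P j (lst n r' j k)))"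
      using r by blast
  qed
  show ?thesis unfolding Qp_def by (simp only: c)
qed

lemma Qp_dec: assumes r: "r \<in> runs n t" and d: "Qp n t P j (lst n r j m) = Decide w"
  shows "P j (lst n r j m) = Decide w \<and> (\<forall>k<m. \<not> is_decide (P j (lst n r j k)))"
proof (cases "\<exists>k<m. is_decide (P j (lst n r j k))")
  case True then show ?thesis using d Qp_eq[OF r] by simp
next
  case False
  have "Qp n t P j (lst n r j m) = P j (lst n r j m)" by (simp only: Qp_eq[OF r] if_not_P[OF False])
  then show ?thesis using d False by simp
qed

lemma once:
  assumes opt: "optimal n t P" and r: "r \<in> runs n t" and i: "i \<in> rN r" and m12: "m1 < m2"
    and d1: "is_decide (P i (lst n r i m1))"
  shows "\<not> is_decide (P i (lst n r i m2))"
proof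
  assume d2: "is_decide (P i (lst n r i m2))"
  have eba: "EBA n t P" using opt unfolding optimal_def by simp
  let ?Q = "Qp n t P"
  have qdec: "decides_in_round ?Q n r' j k w \<Longrightarrow> decides_in_round P n r' j k w \<and>
      (\<forall>k'<k - 1. \<not> is_decide (P j (lst n r' j k')))" if "r' \<in> runs n t" for r' j k w
    using Qp_dec[OF that] unfolding decides_in_round_def by blast
  have qfirst: "\<exists>k w. decides_in_round ?Q n r' j k w" if r': "r' \<in> runs n t" and "decides_in_round P n r' j k0 w0" for r' j k0 w0
  proof -
    have "is_decide (P j (lst n r' j (k0 - 1)))" using that(2) unfolding decides_in_round_def is_decide_def by blast
    from least_ex[of "\<lambda>x. is_decide (P j (lst n r' j x))", OF this]
    obtain y where y: "is_decide (P j (lst n r' j y))" "\<forall>z<y. \<not> is_decide (P j (lst n r' j z))" by blast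
    then obtain w where w: "P j (lst n r' j y) = Decide w" unfolding is_decide_def by blast
    have "?Q j (lst n r' j y) = Decide w" using Qp_eq[OF r', of P j y] y w by auto
    then have "decides_in_round ?Q n r' j (Suc y) w" unfolding decides_in_round_def by simp
    then show ?thesis by blast
  qed
  have ebaQ: "EBA n t ?Q" unfolding EBA_def
  proof (intro ballI conjI allI impI)
    fix r' assume r': "r' \<in> runs n t"
    have P: "(\<forall>i\<in>agts n. \<forall>k k' v. k < k' \<and> decides_in_round P n r' i k v \<longrightarrow> \<not> decides_in_round P n r' i k' (\<not> v))
   \<and> (\<forall>i\<in>rN r'. \<forall>j\<in>rN r'. \<forall>k k' v w. decides_in_round P n r' i k v \<and> decides_in_round P n r' j k' w \<longrightarrow> v = w)
   \<and> (\<forall>i\<in>rN r'. \<forall>k v. decides_in_round P n r' i k v \<longrightarrow> (\<exists>j\<in>agts n. rinit r' j = v))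
   \<and> (\<forall>i\<in>rN r'. \<exists>k v. decides_in_round P n r' i k v)" using eba r' unfolding EBA_def by blast
    show "\<not> decides_in_round ?Q n r' j k' (\<not> v)" if "j \<in> agts n" "k < k' \<and> decides_in_round ?Q n r' j k v" for j k k' v
    proof
      assume a: "decides_in_round ?Q n r' j k' (\<not> v)"
      have "decides_in_round P n r' j k v" using qdec[OF r'] that by blast
      then have "is_decide (P j (lst n r' j (k - 1)))" "1 \<le> k" unfolding decides_in_round_def is_decide_def by auto
      moreover have "\<forall>k''<k' - 1. \<not> is_decide (P j (lst n r' j k''))" using qdec[OF r' a] by blast
      ultimately show False using that by auto
    qed
    show "v = w" if "j \<in> rN r'" "j' \<in> rN r'" "decides_in_round ?Q n r' j k v \<and> decides_in_round ?Q n r' j' k' w" for j j' k k' v w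
      using P that qdec[OF r'] by blast
    show "\<exists>j\<in>agts n. rinit r' j = v" if "j \<in> rN r'" "decides_in_round ?Q n r' j k v" for j k v
      using P that qdec[OF r'] by blast
    show "\<exists>k v. decides_in_round ?Q n r' j k v" if "j \<in> rN r'" for j
      using P that qfirst[OF r'] by blast
  qed
  have domQ: "dominates n t ?Q P" unfolding dominates_def
    using Qp_dec by blast
  have ndom: "\<not> dominates n t P ?Q"
  proof
    assume dom: "dominates n t P ?Q"
    from least_ex[of "\<lambda>x. is_decide (P i (lst n r i x))", OF d1]
    obtain y where y: "y \<le> m1" "is_decide (P i (lst n r i y))" "\<forall>z<y. \<not> is_decide (P i (lst n r i z))" by blast
    then obtain w where w: "P i (lst n r i y) = Decide w" unfolding is_decide_def by blast
    have "?Q i (lst n r i y) = Decide w" using Qp_eq[OF r, of P i y] y w by auto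
    moreover obtain w2 where w2: "P i (lst n r i m2) = Decide w2" using d2 unfolding is_decide_def by blast
    ultimately show False using dom r i y(1) m12 unfolding dominates_def is_decide_def
      by (meson le_less_trans)
  qed
  show False using opt ebaQ domQ ndom unfolding optimal_def by blast
qed

definition Cv :: "protocol \<Rightarrow> nat \<Rightarrow> nat \<Rightarrow> bool \<Rightarrow> fml" where
  "Cv P n t v = C_tfaulty (runs n t) n t (\<lambda>pt. no_decided P n (\<not> v) pt \<and> exists_init n v pt)"

definition trig :: "protocol \<Rightarrow> nat \<Rightarrow> nat \<Rightarrow> bool \<Rightarrow> nat \<Rightarrow> run \<Rightarrow> nat \<Rightarrow> bool" where
  "trig P n t v j r k \<longleftrightarrow> undecided P n j (r, k) \<and> K (runs n t) n j (Cv P n t v) (r, k)"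

definition ftrig :: "protocol \<Rightarrow> nat \<Rightarrow> nat \<Rightarrow> bool \<Rightarrow> nat \<Rightarrow> run \<Rightarrow> nat \<Rightarrow> bool" where
  "ftrig P n t v j r m \<longleftrightarrow> trig P n t v j r m \<and> (\<forall>k<m. \<not> trig P n t v j r k)"

definition P2 :: "protocol \<Rightarrow> nat \<Rightarrow> nat \<Rightarrow> bool \<Rightarrow> protocol" where
  "P2 P n t v j s = (if \<exists>r\<in>runs n t. \<exists>m. lst n r j m = s \<and> ftrig P n t v j r m then Decide v
     else if \<exists>r\<in>runs n t. \<exists>m. lst n r j m = s \<and> (\<exists>k<m. trig P n t v j r k) then Noop else P j s)"

lemma trig_inv: assumes e: "lst n r1 j m = lst n r2 j m" and k: "k \<le> m"
  shows "trig P n t v j r1 k = trig P n t v j r2 k"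
proof -
  have eq: "\<forall>k\<le>m. lst n r1 j k = lst n r2 j k" using lst_prefix[OF e] by simp
  have u: "undecided P n j (r1, k) = undecided P n j (r2, k)"
    unfolding undecided_def decides_in_round_def
  proof (simp only: prod.case, intro iffI allI impI)
    fix k' v
    assume a: "\<forall>k' v. k' \<le> k \<longrightarrow> \<not> (1 \<le> k' \<and> P j (lst n r1 j (k' - 1)) = Decide v)" and b: "k' \<le> k"
    then have "lst n r1 j (k' - 1) = lst n r2 j (k' - 1)" using eq k by simp
    then show "\<not> (1 \<le> k' \<and> P j (lst n r2 j (k' - 1)) = Decide v)" using a b by metis
  next
    fix k' v
    assume a: "\<forall>k' v. k' \<le> k \<longrightarrow> \<not> (1 \<le> k' \<and> P j (lst n r2 j (k' - 1)) = Decide v)" and b: "k' \<le> k"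
    then have "lst n r1 j (k' - 1) = lst n r2 j (k' - 1)" using eq k by simp
    then show "\<not> (1 \<le> k' \<and> P j (lst n r1 j (k' - 1)) = Decide v)" using a b by metis
  qed
  have "lst n r1 j k = lst n r2 j k" using eq k by simp
  then have kk: "K (runs n t) n j (Cv P n t v) (r1, k) = K (runs n t) n j (Cv P n t v) (r2, k)"
    unfolding K_def by simp
  show ?thesis unfolding trig_def using u kk by simp
qed

lemma P2_eq: assumes r: "r \<in> runs n t"
  shows "P2 P n t v j (lst n r j m) = (if ftrig P n t v j r m then Decide v
     else if \<exists>k<m. trig P n t v j r k then Noop else P j (lst n r j m))"
proof -
  have inv: "m' = m \<and> (\<forall>k\<le>m. trig P n t v j r' k = trig P n t v j r k)" if "lst n r' j m' = lst n r j m" for r' m'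
  proof -
    have mm: "m' = m" using lst_prefix[OF that] by simp
    then have "lst n r' j m = lst n r j m" using that by simp
    then show ?thesis using mm trig_inv by blast
  qed
  have c1: "(\<exists>r'\<in>runs n t. \<exists>m'. lst n r' j m' = lst n r j m \<and> ftrig P n t v j r' m') \<longleftrightarrow> ftrig P n t v j r m"
  proof
    assume "\<exists>r'\<in>runs n t. \<exists>m'. lst n r' j m' = lst n r j m \<and> ftrig P n t v j r' m'"
    then obtain r' m' where a: "lst n r' j m' = lst n r j m" "ftrig P n t v j r' m'" by blast
    from inv[OF a(1)] a(2) show "ftrig P n t v j r m" unfolding ftrig_def by auto
  qed (use r in blast)
  have c2: "(\<exists>r'\<in>runs n t. \<exists>m'. lst n r' j m' = lst n r j m \<and> (\<exists>k<m'. trig P n t v j r' k)) \<longleftrightarrow> (\<exists>k<m. trig P n t v j r k)"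
  proof
    assume "\<exists>r'\<in>runs n t. \<exists>m'. lst n r' j m' = lst n r j m \<and> (\<exists>k<m'. trig P n t v j r' k)"
    then obtain r' m' k where a: "lst n r' j m' = lst n r j m" "k < m'" "trig P n t v j r' k" by blast
    from inv[OF a(1)] a(2,3) show "\<exists>k<m. trig P n t v j r k" by auto
  qed (use r in blast)
  show ?thesis unfolding P2_def by (simp only: c1 c2)
qed

lemma P2_dec: assumes r: "r \<in> runs n t" and d: "P2 P n t v j (lst n r j m) = Decide w"
  shows "(ftrig P n t v j r m \<and> w = v) \<or> ((\<forall>k\<le>m. \<not> trig P n t v j r k) \<and> P j (lst n r j m) = Decide w)"
proof (cases "ftrig P n t v j r m")
  case True then show ?thesis using d P2_eq[OF r, of P v j m] by simp
next
  case False
  show ?thesis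
  proof (cases "\<exists>k<m. trig P n t v j r k")
    case True then show ?thesis using d P2_eq[OF r, of P v j m] False by simp
  next
    case F2: False
    have "P2 P n t v j (lst n r j m) = P j (lst n r j m)"
      by (simp only: P2_eq[OF r] if_not_P[OF False] if_not_P[OF F2])
    moreover have "\<forall>k\<le>m. \<not> trig P n t v j r k" using False F2 unfolding ftrig_def
      using le_neq_implies_less by blast
    ultimately show ?thesis using d by simp
  qed
qed

lemma P2_notrig: assumes r: "r \<in> runs n t" and nt: "\<forall>k. \<not> trig P n t v j r k"
  shows "P2 P n t v j (lst n r j m) = P j (lst n r j m)"
proof -
  have a: "\<not> ftrig P n t v j r m" using nt unfolding ftrig_def by simp
  have b: "\<not> (\<exists>k<m. trig P n t v j r k)" using nt by simp
  show ?thesis by (simp only: P2_eq[OF r] if_not_P[OF a] if_not_P[OF b])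
qed

lemma P2_trig: assumes r: "r \<in> runs n t" and tr: "trig P n t v j r k0"
  shows "\<exists>k\<le>k0. ftrig P n t v j r k \<and> P2 P n t v j (lst n r j k) = Decide v"
proof -
  from least_ex[of "trig P n t v j r", OF tr] obtain y where y: "y \<le> k0" "ftrig P n t v j r y"
    unfolding ftrig_def by blast
  then have "P2 P n t v j (lst n r j y) = Decide v" using P2_eq[OF r, of P v j y] by simp
  then show ?thesis using y by blast
qed

lemma K_refl: "r \<in> R \<Longrightarrow> K R n j \<phi> (r, k) \<Longrightarrow> \<phi> (r, k)"
  unfolding K_def by auto

lemma C_E: assumes "C_N R n \<psi> (r, k)" "j \<in> rN r" shows "K R n j (C_N R n \<psi>) (r, k)"
  unfolding K_def C_N_def
proof (simp only: prod.case, intro ballI allI impI)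
  fix r' m' and k' :: nat assume r': "r' \<in> R" and e: "lst n r' j m' = lst n r j k" and k': "1 \<le> k'"
  have one: "(1::nat) \<le> Suc k'" by simp
  have "((E_N R n) ^^ Suc k') \<psi> (r, k)" using assms(1) one unfolding C_N_def by blast
  then have "E_N R n (((E_N R n) ^^ k') \<psi>) (r, k)" by simp
  then have "K R n j (((E_N R n) ^^ k') \<psi>) (r, k)" using assms(2) unfolding E_N_def by simp
  then show "((E_N R n) ^^ k') \<psi> (r', m')" using r' e unfolding K_def by simp
qed

lemma Cv_E: assumes "Cv P n t v (r, k)" "j \<in> rN r" shows "K (runs n t) n j (Cv P n t v) (r, k)"
proof -
  obtain A where A: "A \<subseteq> agts n" "card A = t"
    "C_N (runs n t) n (\<lambda>(r, m). (\<forall>i\<in>A. i \<notin> rN r) \<and> (no_decided P n (\<not> v) (r, m) \<and> exists_init n v (r, m))) (r, k)"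
    using assms(1) unfolding Cv_def C_tfaulty_def by auto
  from C_E[OF A(3) assms(2)] show ?thesis using A(1,2) unfolding K_def Cv_def C_tfaulty_def by auto
qed

lemma Cv_phi: assumes r: "r \<in> runs n t" and tn: "t < n" and c: "Cv P n t v (r, k)"
  shows "no_decided P n (\<not> v) (r, k) \<and> exists_init n v (r, k)"
proof -
  obtain A where A:
    "C_N (runs n t) n (\<lambda>(r, m). (\<forall>i\<in>A. i \<notin> rN r) \<and> (no_decided P n (\<not> v) (r, m) \<and> exists_init n v (r, m))) (r, k)"
    using c unfolding Cv_def C_tfaulty_def by auto
  then have "E_N (runs n t) n (\<lambda>(r, m). (\<forall>i\<in>A. i \<notin> rN r) \<and> (no_decided P n (\<not> v) (r, m) \<and> exists_init n v (r, m))) (r, k)"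
    unfolding C_N_def
  proof -
    assume "\<forall>k'\<ge>1. (E_N (runs n t) n ^^ k') (\<lambda>(r, m). (\<forall>i\<in>A. i \<notin> rN r) \<and> (no_decided P n (\<not> v) (r, m) \<and> exists_init n v (r, m))) (r, k)"
    then have "(E_N (runs n t) n ^^ 1) (\<lambda>(r, m). (\<forall>i\<in>A. i \<notin> rN r) \<and> (no_decided P n (\<not> v) (r, m) \<and> exists_init n v (r, m))) (r, k)"
      by blast
    then show ?thesis by simp
  qed
  moreover obtain j where "j \<in> rN r" using runs_N(2)[OF r tn] by blast
  ultimately have "K (runs n t) n j (\<lambda>(r, m). (\<forall>i\<in>A. i \<notin> rN r) \<and> (no_decided P n (\<not> v) (r, m) \<and> exists_init n v (r, m))) (r, k)"
    unfolding E_N_def by simp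
  from K_refl[OF r this] show ?thesis by simp
qed

lemma main_v:
  assumes tn: "t < n" and opt: "optimal n t P" and r: "r \<in> runs n t"
    and hi: "K (runs n t) n i (Cv P n t v) (r, m)"
    and j: "j \<in> rN r" and uj: "undecided P n j (r, m)"
  shows "is_decide (P j (lst n r j m))"
proof (rule ccontr)
  assume nd: "\<not> is_decide (P j (lst n r j m))"
  have eba: "EBA n t P" using opt unfolding optimal_def by simp
  let ?Q = "P2 P n t v"
  have Pfacts: "(\<forall>i\<in>agts n. \<forall>k k' v. k < k' \<and> decides_in_round P n r' i k v \<longrightarrow> \<not> decides_in_round P n r' i k' (\<not> v))
   \<and> (\<forall>i\<in>rN r'. \<forall>j\<in>rN r'. \<forall>k k' v w. decides_in_round P n r' i k v \<and> decides_in_round P n r' j k' w \<longrightarrow> v = w)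
   \<and> (\<forall>i\<in>rN r'. \<forall>k v. decides_in_round P n r' i k v \<longrightarrow> (\<exists>j\<in>agts n. rinit r' j = v))
   \<and> (\<forall>i\<in>rN r'. \<exists>k v. decides_in_round P n r' i k v)" if "r' \<in> runs n t" for r'
    using eba that unfolding EBA_def by blast
  have G: "?Q j' (lst n r' j' m') \<noteq> Decide (\<not> v)"
    if r': "r' \<in> runs n t" and tr: "trig P n t v j0 r' k0" and jn: "j' \<in> rN r'" for r' j0 k0 j' m'
  proof
    assume d: "?Q j' (lst n r' j' m') = Decide (\<not> v)"
    have C: "Cv P n t v (r', k0)" using K_refl[OF r'] tr unfolding trig_def by blast
    have phi: "no_decided P n (\<not> v) (r', k0)" using Cv_phi[OF r' tn C] by simp
    have nd0: "P j' (lst n r' j' m'') \<noteq> Decide (\<not> v)" if "m'' < k0" for m''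
    proof
      assume "P j' (lst n r' j' m'') = Decide (\<not> v)"
      then have "decides_in_round P n r' j' (Suc m'') (\<not> v)" unfolding decides_in_round_def by simp
      then show False using phi jn that unfolding no_decided_def decided_val_def by auto
    qed
    from P2_dec[OF r' d] have nt: "\<forall>k\<le>m'. \<not> trig P n t v j' r' k" and pd: "P j' (lst n r' j' m') = Decide (\<not> v)"
      by auto
    have km: "k0 \<le> m'" using nd0 pd by (meson not_le)
    show False
    proof (cases "undecided P n j' (r', k0)")
      case True
      then have "trig P n t v j' r' k0" using Cv_E[OF C jn] unfolding trig_def by simp
      then show False using nt km by blast
    next
      case False
      then obtain k' w where k': "k' \<le> k0" "decides_in_round P n r' j' k' w" unfolding undecided_def by auto
      then have k1: "1 \<le> k'" and pw: "P j' (lst n r' j' (k' - 1)) = Decide w" unfolding decides_in_round_def by auto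
      have "w \<noteq> (\<not> v)" using nd0[of "k' - 1"] pw k1 k'(1) by auto
      then have wv: "w = v" by blast
      have dd: "decides_in_round P n r' j' (Suc m') (\<not> v)" using pd unfolding decides_in_round_def by simp
      have "j' \<in> agts n" using runs_N(1)[OF r' tn] jn by blast
      then have uq: "\<forall>k k' v. k < k' \<and> decides_in_round P n r' j' k v \<longrightarrow> \<not> decides_in_round P n r' j' k' (\<not> v)"
        by (rule bspec[OF conjunct1[OF Pfacts[OF r']]])
      have "k' < Suc m'" using k'(1) km by simp
      then have "\<not> decides_in_round P n r' j' (Suc m') (\<not> w)" using uq k'(2) by blast
      with dd show False using wv by simp
    qed
  qed
  have D1: "w = v" if r': "r' \<in> runs n t" and tr: "trig P n t v j' r' k0" and d: "?Q j' (lst n r' j' m') = Decide w"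
    for r' j' k0 m' w
  proof (rule ccontr)
    assume wv: "w \<noteq> v"
    from P2_dec[OF r' d] wv have nt: "\<forall>k\<le>m'. \<not> trig P n t v j' r' k" and pd: "P j' (lst n r' j' m') = Decide w"
      by auto
    have "m' < k0" using nt tr by (meson not_le)
    then have "decides_in_round P n r' j' (Suc m') w" "Suc m' \<le> k0" using pd unfolding decides_in_round_def by auto
    then show False using tr unfolding trig_def undecided_def by blast
  qed
  have decQ: "decides_in_round ?Q n r' j' k w \<longleftrightarrow> 1 \<le> k \<and> ?Q j' (lst n r' j' (k - 1)) = Decide w" for r' j' k w
    unfolding decides_in_round_def by simp
  have ebaQ: "EBA n t ?Q" unfolding EBA_def
  proof (intro ballI conjI allI impI)
    fix r' assume r': "r' \<in> runs n t"
    note PF = Pfacts[OF r']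
    show "\<not> decides_in_round ?Q n r' j' k' (\<not> u)" if jj: "j' \<in> agts n" and kk: "k < k' \<and> decides_in_round ?Q n r' j' k u" for j' k k' u
    proof
      assume a: "decides_in_round ?Q n r' j' k' (\<not> u)"
      show False
      proof (cases "\<exists>k0. trig P n t v j' r' k0")
        case True
        then obtain k0 where tr: "trig P n t v j' r' k0" by blast
        have "u = v" using D1[OF r' tr] kk unfolding decQ by blast
        moreover have "(\<not> u) = v" using D1[OF r' tr] a unfolding decQ by blast
        ultimately show False by simp
      next
        case False
        then have eq: "?Q j' (lst n r' j' x) = P j' (lst n r' j' x)" for x using P2_notrig[OF r'] by blast
        show False using PF jj kk a unfolding decides_in_round_def eq by blast
      qed
    qed
    show "u = w" if "j1 \<in> rN r'" "j2 \<in> rN r'" "decides_in_round ?Q n r' j1 k u \<and> decides_in_round ?Q n r' j2 k' w" for j1 j2 k k' u w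
    proof (cases "\<exists>j0 k0. trig P n t v j0 r' k0")
      case True
      then obtain j0 k0 where tr: "trig P n t v j0 r' k0" by blast
      have "u \<noteq> (\<not> v)" using G[OF r' tr that(1)] that(3) unfolding decQ by blast
      moreover have "w \<noteq> (\<not> v)" using G[OF r' tr that(2)] that(3) unfolding decQ by blast
      ultimately show ?thesis by blast
    next
      case False
      then have eq: "?Q j'' (lst n r' j'' x) = P j'' (lst n r' j'' x)" for x j'' using P2_notrig[OF r'] by blast
      show ?thesis using PF that unfolding decides_in_round_def eq by blast
    qed
    show "\<exists>j\<in>agts n. rinit r' j = w" if "j' \<in> rN r'" "decides_in_round ?Q n r' j' k w" for j' k w
    proof -
      have k1: "1 \<le> k" and d: "?Q j' (lst n r' j' (k - 1)) = Decide w" using that(2) unfolding decQ by auto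
      from P2_dec[OF r' d] show ?thesis
      proof
        assume a: "ftrig P n t v j' r' (k - 1) \<and> w = v"
        then have "Cv P n t v (r', k - 1)" using K_refl[OF r'] unfolding ftrig_def trig_def by blast
        then show ?thesis using Cv_phi[OF r' tn] a unfolding exists_init_def by auto
      next
        assume a: "(\<forall>ka\<le>k - 1. \<not> trig P n t v j' r' ka) \<and> P j' (lst n r' j' (k - 1)) = Decide w"
        then have "decides_in_round P n r' j' k w" using k1 unfolding decides_in_round_def by simp
        then show ?thesis using PF that(1) by blast
      qed
    qed
    show "\<exists>k w. decides_in_round ?Q n r' j' k w" if jn: "j' \<in> rN r'" for j'
    proof (cases "\<exists>k0. trig P n t v j' r' k0")
      case True
      then obtain k0 where "trig P n t v j' r' k0" by blast
      from P2_trig[OF r' this] obtain k where "?Q j' (lst n r' j' k) = Decide v" by blast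
      then have "decides_in_round ?Q n r' j' (Suc k) v" unfolding decQ by simp
      then show ?thesis by blast
    next
      case False
      then have eq: "?Q j' (lst n r' j' x) = P j' (lst n r' j' x)" for x using P2_notrig[OF r'] by blast
      show ?thesis using PF jn unfolding decides_in_round_def eq by blast
    qed
  qed
  have domQ: "dominates n t ?Q P" unfolding dominates_def
  proof (intro ballI allI impI)
    fix r' j' m' w m'' assume r': "r' \<in> runs n t" and jn: "j' \<in> rN r'" and d: "?Q j' (lst n r' j' m') = Decide w"
      and mm: "m'' < m'"
    from P2_dec[OF r' d] show "\<not> is_decide (P j' (lst n r' j' m''))"
    proof
      assume "ftrig P n t v j' r' m' \<and> w = v"
      then have u: "undecided P n j' (r', m')" unfolding ftrig_def trig_def by blast
      show ?thesis
      proof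
        assume "is_decide (P j' (lst n r' j' m''))"
        then obtain w' where "P j' (lst n r' j' m'') = Decide w'" unfolding is_decide_def by blast
        then have "decides_in_round P n r' j' (Suc m'') w'" unfolding decides_in_round_def by simp
        then show False using u mm unfolding undecided_def by auto
      qed
    next
      assume "(\<forall>k\<le>m'. \<not> trig P n t v j' r' k) \<and> P j' (lst n r' j' m') = Decide w"
      then have "is_decide (P j' (lst n r' j' m'))" unfolding is_decide_def by blast
      then show ?thesis using once[OF opt r' jn mm] by blast
    qed
  qed
  have ndom: "\<not> dominates n t P ?Q"
  proof
    assume dom: "dominates n t P ?Q"
    have C: "Cv P n t v (r, m)" using K_refl[OF r hi] .
    have "trig P n t v j r m" using Cv_E[OF C j] uj unfolding trig_def by simp
    from P2_trig[OF r this] obtain k where k: "k \<le> m" "?Q j (lst n r j k) = Decide v" by blast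
    obtain k1 w1 where "decides_in_round P n r j k1 w1" using Pfacts[OF r] j by blast
    then have k1: "1 \<le> k1" and pw: "P j (lst n r j (k1 - 1)) = Decide w1" unfolding decides_in_round_def by auto
    have "\<not> k1 \<le> m" using uj pw k1 unfolding undecided_def decides_in_round_def by blast
    moreover have "k1 - 1 \<noteq> m" using nd pw unfolding is_decide_def by auto
    ultimately have "k < k1 - 1" using k(1) by linarith
    then show False using dom r j pw k(2) unfolding dominates_def is_decide_def by blast
  qed
  show False using opt ebaQ domQ ndom unfolding optimal_def by blast
qed

theorem mainTheorem7:
  fixes n t :: nat and P :: protocol and r :: run and i m :: nat
  assumes "t < n" and "optimal n t P" and "r \<in> runs n t" and "i \<in> agts n"
  shows "((undecided P n i (r, m) \<and>
            K (runs n t) n i (C_tfaulty (runs n t) n t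
               (\<lambda>pt. no_decided P n True pt \<and> exists_init n False pt)) (r, m))
          \<or> (undecided P n i (r, m) \<and>
            K (runs n t) n i (C_tfaulty (runs n t) n t
               (\<lambda>pt. no_decided P n False pt \<and> exists_init n True pt)) (r, m)))
         \<longrightarrow> (\<forall>j\<in>rN r. undecided P n j (r, m) \<longrightarrow> is_decide (P j (lst n r j m)))"
proof (intro impI ballI)
  fix j assume H: "(undecided P n i (r, m) \<and>
            K (runs n t) n i (C_tfaulty (runs n t) n t
               (\<lambda>pt. no_decided P n True pt \<and> exists_init n False pt)) (r, m))
          \<or> (undecided P n i (r, m) \<and>
            K (runs n t) n i (C_tfaulty (runs n t) n t
               (\<lambda>pt. no_decided P n False pt \<and> exists_init n True pt)) (r, m))"
    and j: "j \<in> rN r" and uj: "undecided P n j (r, m)"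
  from H show "is_decide (P j (lst n r j m))"
  proof
    assume a: "undecided P n i (r, m) \<and>
            K (runs n t) n i (C_tfaulty (runs n t) n t
               (\<lambda>pt. no_decided P n True pt \<and> exists_init n False pt)) (r, m)"
    have "K (runs n t) n i (Cv P n t False) (r, m)" using a unfolding Cv_def by simp
    from main_v[OF assms(1,2,3) this j uj] show ?thesis .
  next
    assume a: "undecided P n i (r, m) \<and>
            K (runs n t) n i (C_tfaulty (runs n t) n t
               (\<lambda>pt. no_decided P n False pt \<and> exists_init n True pt)) (r, m)"
    have "K (runs n t) n i (Cv P n t True) (r, m)" using a unfolding Cv_def by simp
    from main_v[OF assms(1,2,3) this j uj] show ?thesis .
  qed
qed
end
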